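(* Let $(F_k)_{k\geq1}$ be a sequence of cumulative distribution functions on $\mathbb{R}$ and $F$ a cumulative distribution function such that $F_k(x)^k\to F(x)$ as $k\to\infty$ at every point $x$ where $F$ is continuous. Then at every such $x$, $F_k^{\Box\!\vee k}(x)\to\max(0,1+\log F(x))$ as $k\to\infty$.
   Context: For cumulative distribution functions $F,G$, the free upper extremal convolution is $F\,\Box\!\vee\, G=\max(0,F+G-1)$ (pointwise), and $F^{\Box\!\vee k}=F\,\Box\!\vee\cdots\Box\!\vee\, F$ ($k$ factors, taken iteratively). Convention: $\log 0=-\infty$, so $\max(0,1+\log 0)=0$. *)

theory Defs
  imports "HOL-Analysis.Analysis"
begin

definition is_cdf :: "(real \<Rightarrow> real) \<Rightarrow> bool" where
  "is_cdf F \<longleftrightarrow> mono F \<and> (\<forall>x. continuous (at_right x) F)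
     \<and> (F \<longlongrightarrow> 0) at_bot \<and> (F \<longlongrightarrow> 1) at_top"

definition box_vee :: "(real \<Rightarrow> real) \<Rightarrow> (real \<Rightarrow> real) \<Rightarrow> real \<Rightarrow> real" where
  "box_vee F G = (\<lambda>x. max 0 (F x + G x - 1))"

fun box_vee_pow :: "(real \<Rightarrow> real) \<Rightarrow> nat \<Rightarrow> real \<Rightarrow> real" where
  "box_vee_pow F 0 = F"
| "box_vee_pow F (Suc 0) = F"
| "box_vee_pow F (Suc (Suc n)) = box_vee (box_vee_pow F (Suc n)) F"

text \<open>max(0, 1 + log t) with the convention log 0 = -infinity.\<close>
definition max0_1_log :: "real \<Rightarrow> real" where
  "max0_1_log t = (if t = 0 then 0 else max 0 (1 + ln t))"

end

theory Submission
  imports Defs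
begin

lemma cdf_bounds: assumes "is_cdf G" shows "0 \<le> G x \<and> G x \<le> 1"
proof -
  have m: "mono G" and b: "(G \<longlongrightarrow> 0) at_bot" and t: "(G \<longlongrightarrow> 1) at_top"
    using assms unfolding is_cdf_def by auto
  have "eventually (\<lambda>y. G y \<le> G x) at_bot"
    unfolding eventually_at_bot_linorder using m by (auto simp: mono_def)
  hence "0 \<le> G x" using tendsto_upperbound[OF b] by auto
  moreover have "eventually (\<lambda>y. G x \<le> G y) at_top"
    unfolding eventually_at_top_linorder using m by (auto simp: mono_def)
  hence "G x \<le> 1" using tendsto_lowerbound[OF t] by auto
  ultimately show ?thesis by simp
qed

lemma pow_formula:
  assumes "0 \<le> G x" "G x \<le> 1"
  shows "box_vee_pow G (Suc n) x = max 0 (real (Suc n) * G x - real n)"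
proof (induction n)
  case 0 then show ?case using assms by simp
next
  case (Suc n)
  show ?case using Suc assms by (simp add: box_vee_def max_def algebra_simps)
qed

lemma ln_ge: "0 < (g::real) \<Longrightarrow> 1 - 1/g \<le> ln g"
proof -
  assume g: "0 < g"
  have "ln (1/g) \<le> 1/g - 1" using g by (intro ln_le_minus_one) auto
  thus ?thesis using g by (simp add: ln_div)
qed

lemma main_lim:
  fixes g :: "nat \<Rightarrow> real"
  assumes b: "\<And>k. 0 \<le> g k \<and> g k \<le> 1"
    and c: "(\<lambda>k. g k ^ k) \<longlonglongrightarrow> L"
  shows "(\<lambda>k. max 0 (1 - real k * (1 - g k))) \<longlonglongrightarrow> max0_1_log L"
proof (cases "L = 0")
  case True
  have "(\<lambda>k. max 0 (1 - real k * (1 - g k))) \<longlonglongrightarrow> 0"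
  proof (rule tendsto_sandwich[of "\<lambda>_. 0" _ _ "\<lambda>k. g k ^ k"])
    show "\<forall>\<^sub>F n in sequentially. 0 \<le> max 0 (1 - real n * (1 - g n))" by simp
    show "\<forall>\<^sub>F n in sequentially. max 0 (1 - real n * (1 - g n)) \<le> g n ^ n"
    proof (rule always_eventually, intro allI)
      fix n
      have "1 + real n * (g n - 1) \<le> (1 + (g n - 1)) ^ n"
        using b[of n] by (intro Bernoulli_inequality) auto
      thus "max 0 (1 - real n * (1 - g n)) \<le> g n ^ n" using b[of n]
        by (auto simp: algebra_simps)
    qed
  qed (use c True in auto)
  thus ?thesis using True by (simp add: max0_1_log_def)
next
  case False
  have L0: "0 \<le> L" using c b by (intro tendsto_lowerbound[OF c]) auto
  hence Lp: "0 < L" using False by simp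
  have ev: "eventually (\<lambda>k. g k ^ k > L/2) sequentially"
    using c Lp by (intro order_tendstoD) auto
  have evp: "eventually (\<lambda>k. 0 < g k) sequentially"
    using ev eventually_gt_at_top[of 0]
  proof eventually_elim
    case (elim k)
    have "g k \<noteq> 0"
    proof
      assume "g k = 0" thus False using elim Lp by (simp add: zero_power)
    qed
    thus "0 < g k" using b[of k] by simp
  qed
  define a where "a k = - (real k * ln (g k))" for k
  have "(\<lambda>k. ln (g k ^ k)) \<longlonglongrightarrow> ln L" using c Lp by (intro tendsto_ln) auto
  moreover have "eventually (\<lambda>k. ln (g k ^ k) = - a k) sequentially"
    using evp by eventually_elim (simp add: a_def ln_realpow)
  ultimately have "(\<lambda>k. - a k) \<longlonglongrightarrow> ln L" by (rule Lim_transform_eventually)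
  hence a: "a \<longlonglongrightarrow> - ln L" using tendsto_minus by fastforce
  have "(\<lambda>k. a k * inverse (real k)) \<longlonglongrightarrow> (- ln L) * 0"
    by (intro tendsto_mult a tendsto_inverse_0_at_top filterlim_real_sequentially)
  hence "(\<lambda>k. exp (- (a k * inverse (real k)))) \<longlonglongrightarrow> exp (- ((- ln L) * 0))"
    by (rule tendsto_exp[OF tendsto_minus])
  moreover have "eventually (\<lambda>k. exp (- (a k * inverse (real k))) = g k) sequentially"
    using evp eventually_gt_at_top[of 0]
    by eventually_elim (simp add: a_def field_simps)
  ultimately have g1: "g \<longlonglongrightarrow> 1" by (simp add: Lim_transform_eventually)
  have "(\<lambda>k. real k * (1 - g k)) \<longlonglongrightarrow> - ln L"
  proof (rule tendsto_sandwich[of "\<lambda>k. g k * a k" _ _ a])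
    show "\<forall>\<^sub>F n in sequentially. g n * a n \<le> real n * (1 - g n)"
      using evp
    proof eventually_elim
      case (elim n)
      have "1 - 1 / g n \<le> ln (g n)" using ln_ge elim by simp
      hence "real n * (1 - 1 / g n) \<le> real n * ln (g n)" by (rule mult_left_mono) auto
      hence "g n * (real n * (1 - 1 / g n)) \<le> g n * (real n * ln (g n))"
        by (rule mult_left_mono[OF _ less_imp_le[OF elim]])
      moreover have "g n * (real n * (1 - 1 / g n)) = real n * (g n - 1)"
        using elim by (simp add: field_simps)
      moreover have "g n * a n = - (g n * (real n * ln (g n)))" by (simp add: a_def)
      ultimately show ?case by (simp add: algebra_simps)
    qed
    show "\<forall>\<^sub>F n in sequentially. real n * (1 - g n) \<le> a n"
      using evp
    proof eventually_elim
      case (elim n)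
      have "ln (g n) \<le> g n - 1" using elim by (intro ln_le_minus_one) auto
      hence "real n * ln (g n) \<le> real n * (g n - 1)" by (intro mult_left_mono) auto
      thus ?case by (simp add: a_def algebra_simps)
    qed
    show "(\<lambda>k. g k * a k) \<longlonglongrightarrow> - ln L" using tendsto_mult[OF g1 a] by simp
  qed (rule a)
  hence "(\<lambda>k. max 0 (1 - real k * (1 - g k))) \<longlonglongrightarrow> max 0 (1 - - ln L)"
    by (intro tendsto_intros)
  thus ?thesis using False by (simp add: max0_1_log_def)
qed

theorem mainTheorem7:
  fixes Fs :: "nat \<Rightarrow> real \<Rightarrow> real" and F :: "real \<Rightarrow> real"
  assumes cdfs: "\<And>k. k \<ge> 1 \<Longrightarrow> is_cdf (Fs k)"
    and cdf: "is_cdf F"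
    and conv: "\<And>x. isCont F x \<Longrightarrow> (\<lambda>k. Fs k x ^ k) \<longlonglongrightarrow> F x"
  shows "\<And>x. isCont F x \<Longrightarrow> (\<lambda>k. box_vee_pow (Fs k) k x) \<longlonglongrightarrow> max0_1_log (F x)"
proof -
  fix x assume ic: "isCont F x"
  define g where "g k = (if k = 0 then 1 else Fs k x)" for k
  have gb: "0 \<le> g k \<and> g k \<le> 1" for k
    using cdf_bounds[OF cdfs, of k x] by (auto simp: g_def)
  have "(\<lambda>k. Fs k x ^ k) \<longlonglongrightarrow> F x" using conv ic by auto
  moreover have "eventually (\<lambda>k. Fs k x ^ k = g k ^ k) sequentially"
    using eventually_gt_at_top[of 0] by eventually_elim (simp add: g_def)
  ultimately have "(\<lambda>k. g k ^ k) \<longlonglongrightarrow> F x" by (rule Lim_transform_eventually)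
  from main_lim[OF gb this]
  have lim: "(\<lambda>k. max 0 (1 - real k * (1 - g k))) \<longlonglongrightarrow> max0_1_log (F x)" .
  have "eventually (\<lambda>k. max 0 (1 - real k * (1 - g k)) = box_vee_pow (Fs k) k x) sequentially"
    using eventually_gt_at_top[of 0]
  proof eventually_elim
    case (elim k)
    then obtain n where k: "k = Suc n" by (cases k) auto
    have "box_vee_pow (Fs k) (Suc n) x = max 0 (real (Suc n) * Fs k x - real n)"
      using cdf_bounds[OF cdfs, of k x] k by (intro pow_formula) auto
    thus ?case using k by (simp add: g_def algebra_simps)
  qed
  with lim show "(\<lambda>k. box_vee_pow (Fs k) k x) \<longlonglongrightarrow> max0_1_log (F x)"
    by (rule Lim_transform_eventually)
qed

end
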